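(* Suppose the original system $x^+=f(x,u)$ is cost controllable on a set $S\subseteq\mathbb{R}^n$ (containing $0$ in its interior) with sequence $(B_N)_{N\in\mathbb{N}_0}$. Let $\bar N\in\mathbb{N}$ and suppose Assumption (EB) and Assumption (L) hold on a set $\Omega$ such that $S\oplus\mathcal{B}_{r(\bar N)\eta^\varepsilon}(0)\subseteq\Omega$ for all $\varepsilon\in(0,\bar\varepsilon]$, where $r(\bar N):=\sum_{i=0}^{\bar N-1}\bar L^i$. Then there exists, for every $\varepsilon\in(0,\bar\varepsilon]$, a monotonically increasing finite sequence $(B_N^\varepsilon)_{N\in[1:\bar N]}$ such that for each pair $(\hat x,N)\in S\times[1:\bar N]$ there exists $\mathbf{u}=\mathbf{u}(\hat x)\in\mathcal{U}_N$ with $$V_N^\varepsilon(\hat x)\le J_N^\varepsilon(\hat x,\mathbf{u})\le B_N^\varepsilon\,\ell^\star(\hat x),$$ and $\lim_{\varepsilon\searrow 0}B_N^\varepsilon=B_N$ for every $N\in[1:\bar N]$. The same statement holds with the roles of $f$ and $f^\varepsilon$ interchanged: if the surrogate $f^\varepsilon$ satisfies the growth bound $V^\varepsilon_N(\hat x)\le J^\varepsilon_N(\hat x,\mathbf u)\le B_N\ell^\star(\hat x)$ (with a control sequence keeping the surrogate trajectory in $S$), then the original dynamics $f$ satisfies a growth bound $J_N(\hat x,\mathbf u)\le B^\varepsilon_N\ell^\star(\hat x)$ on $S$ for all $N\in[1:\bar N]$ with $B_N^\varepsilon\to B_N$ as $\varepsilon\searrow0$.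
   Context: Let $\mathbb{U}\subset\mathbb{R}^m$ be convex and compact with $0$ in its interior. The original system is $x^+=f(x,u)$ with $f:\mathbb{R}^n\times\mathbb{U}\to\mathbb{R}^n$ continuous and $f(0,0)=0$. A family of surrogate models $x^+=f^\varepsilon(x,u)$, $f^\varepsilon:\mathbb{R}^n\times\mathbb{U}\to\mathbb{R}^n$, is given for $\varepsilon\in(0,\bar\varepsilon]$, $\bar\varepsilon>0$. Stage cost: $\ell(x,u)=x^\top Qx+u^\top Ru$ with $Q\in\mathbb{R}^{n\times n}$, $R\in\mathbb{R}^{m\times m}$ symmetric positive definite; $\ell^\star(x):=\min_{u\in\mathbb U}\ell(x,u)=\|x\|_Q^2=x^\top Qx$. For $N\in\mathbb{N}\cup\{\infty\}$, $\mathcal{U}_N$ is the set of sequences $\mathbf u=(u(k))_{k=0}^{N-1}\subset\mathbb{U}$ (admissible controls). For $\hat x\in\mathbb{R}^n$ and $\mathbf u\in\mathcal U_N$, $x_{\mathbf u}(0)=\hat x$, $x_{\mathbf u}(k+1)=f(x_{\mathbf u}(k),u(k))$, and $x^\varepsilon_{\mathbf u}(0)=\hat x$, $x^\varepsilon_{\mathbf u}(k+1)=f^\varepsilon(x^\varepsilon_{\mathbf u}(k),u(k))$. Costs: $J_N(\hat x,\mathbf u)=\sum_{k=0}^{N-1}\ell(x_{\mathbf u}(k),u(k))$, $J^\varepsilon_N(\hat x,\mathbf u)=\sum_{k=0}^{N-1}\ell(x^\varepsilon_{\mathbf u}(k),u(k))$; value functions $V_N(\hat x)=\inf_{\mathbf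 u\in\mathcal U_N}J_N(\hat x,\mathbf u)$, $V^\varepsilon_N(\hat x)=\inf_{\mathbf u\in\mathcal U_N}J^\varepsilon_N(\hat x,\mathbf u)$. Assumption (EB) on a set $\Omega\subseteq\mathbb{R}^n$ containing $0$ in its interior: there are constants $c_x^\varepsilon,c_u^\varepsilon,\eta^\varepsilon\ge0$ with $\lim_{\varepsilon\searrow0}\max\{c_x^\varepsilon,c_u^\varepsilon,\eta^\varepsilon\}=0$ such that for all $\varepsilon\in(0,\bar\varepsilon]$, $x\in\Omega$, $u\in\mathbb U$: $\|f(x,u)-f^\varepsilon(x,u)\|\le c_x^\varepsilon\|x\|+c_u^\varepsilon\|u\|$ (proportional bound) and $\|f(x,u)-f^\varepsilon(x,u)\|\le\eta^\varepsilon$ (uniform bound). Assumption (L) on $\Omega$: there are constants $L_f\ge0$ and $\bar L\ge0$ such that for all $x,y\in\Omega$, $u\in\mathbb U$, $\varepsilon\in(0,\bar\varepsilon]$: $\|f(x,u)-f(y,u)\|\le L_f\|x-y\|$ and $\|f^\varepsilon(x,u)-f^\varepsilon(y,u)\|\le L_{f^\varepsilon}\|x-y\|$ with $L_{f^\varepsilon}\le\bar L$. Cost controllability on $S$: there is a monotonically increasing bounded sequence $(B_N)_{N\in\mathbb N_0}$ such that for every $\hat x\in S$ there is $\mathbf u=\mathbf u(\hat x)\in\mathcal U_\infty$ with $x_{\mathbf u}(k)\in S$ for all $k\ge0$ and $V_N(\hat x)\le J_N(\hat x,\mathbf u)\le B_N\ell^\star(\hat x)$ for all $N\in\mathbb N$.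 $\oplus$ denotes Minkowski sum and $\mathcal B_r(0)$ the closed Euclidean ball of radius $r$. *)

theory Defs
  imports "HOL-Analysis.Analysis"
begin

definition pos_def_sym :: "real^'k^'k \<Rightarrow> bool" where
  "pos_def_sym A \<longleftrightarrow> transpose A = A \<and> (\<forall>x. x \<noteq> 0 \<longrightarrow> x \<bullet> (A *v x) > 0)"

definition stage_cost :: "real^'n^'n \<Rightarrow> real^'m^'m \<Rightarrow> real^'n \<Rightarrow> real^'m \<Rightarrow> real" where
  "stage_cost Q R x u = x \<bullet> (Q *v x) + u \<bullet> (R *v u)"

definition lstar :: "real^'n^'n \<Rightarrow> real^'n \<Rightarrow> real" where
  "lstar Q x = x \<bullet> (Q *v x)"

fun traj :: "(real^'n \<Rightarrow> real^'m \<Rightarrow> real^'n) \<Rightarrow> real^'n \<Rightarrow> (nat \<Rightarrow> real^'m) \<Rightarrow> nat \<Rightarrow> real^'n" where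
  "traj g xh u 0 = xh"
| "traj g xh u (Suc k) = g (traj g xh u k) (u k)"

text \<open>Admissible controls of length N (only the first N entries matter).\<close>
definition adm :: "(real^'m) set \<Rightarrow> nat \<Rightarrow> (nat \<Rightarrow> real^'m) \<Rightarrow> bool" where
  "adm U N u \<longleftrightarrow> (\<forall>k<N. u k \<in> U)"

definition costJ :: "(real^'n \<Rightarrow> real^'m \<Rightarrow> real^'n) \<Rightarrow> real^'n^'n \<Rightarrow> real^'m^'m
    \<Rightarrow> nat \<Rightarrow> real^'n \<Rightarrow> (nat \<Rightarrow> real^'m) \<Rightarrow> real" where
  "costJ g Q R N xh u = (\<Sum>k<N. stage_cost Q R (traj g xh u k) (u k))"

definition valV :: "(real^'n \<Rightarrow> real^'m \<Rightarrow> real^'n) \<Rightarrow> (real^'m) set \<Rightarrow> real^'n^'n \<Rightarrow> real^'m^'m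
    \<Rightarrow> nat \<Rightarrow> real^'n \<Rightarrow> real" where
  "valV g U Q R N xh = Inf {costJ g Q R N xh u | u. adm U N u}"

definition cost_controllable :: "(real^'n \<Rightarrow> real^'m \<Rightarrow> real^'n) \<Rightarrow> (real^'m) set \<Rightarrow> real^'n^'n
    \<Rightarrow> real^'m^'m \<Rightarrow> (real^'n) set \<Rightarrow> (nat \<Rightarrow> real) \<Rightarrow> bool" where
  "cost_controllable g U Q R S B \<longleftrightarrow> mono B \<and> bounded (range B) \<and>
     (\<forall>xh\<in>S. \<exists>u. (\<forall>k. u k \<in> U) \<and> (\<forall>k. traj g xh u k \<in> S) \<and>
        (\<forall>N\<ge>1. valV g U Q R N xh \<le> costJ g Q R N xh u \<and>
                 costJ g Q R N xh u \<le> B N * lstar Q xh))"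

definition msum :: "'a::ab_group_add set \<Rightarrow> 'a set \<Rightarrow> 'a set" where
  "msum A C = {a + c | a c. a \<in> A \<and> c \<in> C}"

definition growth_bounds :: "(real \<Rightarrow> real^'n \<Rightarrow> real^'m \<Rightarrow> real^'n) \<Rightarrow> (real^'m) set \<Rightarrow> real^'n^'n
    \<Rightarrow> real^'m^'m \<Rightarrow> (real^'n) set \<Rightarrow> real \<Rightarrow> nat \<Rightarrow> (nat \<Rightarrow> real) \<Rightarrow> bool" where
  "growth_bounds g U Q R S epsbar Nbar B \<longleftrightarrow>
     (\<exists>Be :: real \<Rightarrow> nat \<Rightarrow> real.
       (\<forall>eps\<in>{0<..epsbar}.
          (\<forall>i j. 1 \<le> i \<longrightarrow> i \<le> j \<longrightarrow> j \<le> Nbar \<longrightarrow> Be eps i \<le> Be eps j) \<and>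
          (\<forall>xh\<in>S. \<forall>N\<in>{1..Nbar}. \<exists>u. adm U N u \<and>
              valV (g eps) U Q R N xh \<le> costJ (g eps) Q R N xh u \<and>
              costJ (g eps) Q R N xh u \<le> Be eps N * lstar Q xh)) \<and>
       (\<forall>N\<in>{1..Nbar}. ((\<lambda>eps. Be eps N) \<longlongrightarrow> B N) (at_right 0)))"

end

theory Submission
  imports Defs
begin

lemma quad_bound:
  fixes A :: "real^'n^'n"
  obtains K where "K \<ge> 0" "\<And>x y. \<bar>x \<bullet> (A *v y)\<bar> \<le> K * norm x * norm y"
proof -
  obtain K where K: "K > 0" "\<And>y. norm (A *v y) \<le> norm y * K"
    using bounded_linear.pos_bounded[OF matrix_vector_mul_bounded_linear[of A]] by blast
  have "\<bar>x \<bullet> (A *v y)\<bar> \<le> K * norm x * norm y" for x y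
  proof -
    have "\<bar>x \<bullet> (A *v y)\<bar> \<le> norm x * norm (A *v y)" by (rule Cauchy_Schwarz_ineq2)
    also have "\<dots> \<le> norm x * (norm y * K)" by (rule mult_left_mono[OF K(2)]) simp
    finally show ?thesis by (simp add: algebra_simps)
  qed
  with K show ?thesis using that[of K] by auto
qed

lemma posdef_lower:
  fixes A :: "real^'n^'n"
  assumes "pos_def_sym A"
  obtains lam where "lam > 0" "\<And>x. lam * (norm x)^2 \<le> x \<bullet> (A *v x)"
proof -
  let ?q = "\<lambda>x::real^'n. x \<bullet> (A *v x)"
  let ?S = "sphere (0::real^'n) 1"
  have cont: "continuous_on ?S ?q"
    by (intro continuous_intros bounded_linear.continuous_on[OF matrix_vector_mul_bounded_linear] continuous_on_id)
  have ne: "?S \<noteq> {}" by (simp add: sphere_eq_empty)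
  obtain x0 where x0: "x0 \<in> ?S" "\<And>y. y \<in> ?S \<Longrightarrow> ?q x0 \<le> ?q y"
    using continuous_attains_inf[OF compact_sphere ne cont] by blast
  have "x0 \<noteq> 0" using x0(1) by auto
  hence pos: "?q x0 > 0" using assms unfolding pos_def_sym_def by blast
  have "?q x0 * (norm x)^2 \<le> ?q x" for x
  proof (cases "x = 0")
    case True then show ?thesis by simp
  next
    case False
    let ?y = "(1 / norm x) *\<^sub>R x"
    have "?y \<in> ?S" using False by simp
    hence "?q x0 \<le> ?q ?y" by (rule x0(2))
    also have "?q ?y = ?q x / (norm x)^2"
      by (simp add: matrix_vector_mult_scaleR power2_eq_square)
    finally show ?thesis using False by (simp add: field_simps)
  qed
  thus ?thesis using that pos by blast
qed

lemma stage_nonneg: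
  assumes "\<forall>x. lamQ * (norm x)^2 \<le> x \<bullet> (Q *v x)" "lamQ > 0"
    and "\<forall>x. lamR * (norm x)^2 \<le> x \<bullet> (R *v x)" "lamR > 0"
  shows "stage_cost Q R x u \<ge> lamQ * (norm x)^2 + lamR * (norm u)^2"
  using assms unfolding stage_cost_def by (metis add_mono)

lemma state_bounds:
  fixes g1 :: "real^'n \<Rightarrow> real^'m \<Rightarrow> real^'n"
  assumes lQ: "\<forall>x. lamQ * (norm x)^2 \<le> x \<bullet> (Q *v x)" "lamQ > 0"
    and lR: "\<forall>x. lamR * (norm x)^2 \<le> x \<bullet> (R *v x)" "lamR > 0"
    and KQ: "KQ \<ge> 0" "\<forall>x y. \<bar>x \<bullet> (Q *v y)\<bar> \<le> KQ * norm x * norm y"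
    and cost: "costJ g1 Q R Nbar xh u \<le> B Nbar * lstar Q xh"
    and k: "k < Nbar"
  shows "norm (traj g1 xh u k) \<le> sqrt (max (B Nbar) 0 * KQ / lamQ) * norm xh"
    and "norm (u k) \<le> sqrt (max (B Nbar) 0 * KQ / lamR) * norm xh"
proof -
  let ?x = "traj g1 xh u k"
  let ?BB = "max (B Nbar) 0"
  have nn: "\<And>j. stage_cost Q R (traj g1 xh u j) (u j) \<ge> 0"
  proof -
    fix j
    have "0 \<le> lamQ * (norm (traj g1 xh u j))^2 + lamR * (norm (u j))^2"
      using lQ(2) lR(2) by simp
    also have "\<dots> \<le> stage_cost Q R (traj g1 xh u j) (u j)"
      by (rule stage_nonneg[OF lQ lR])
    finally show "stage_cost Q R (traj g1 xh u j) (u j) \<ge> 0" .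
  qed
  have ls: "lstar Q xh \<le> KQ * (norm xh)^2"
    using KQ(2) unfolding lstar_def power2_eq_square by (metis abs_le_D1 mult.assoc)
  have ls0: "lstar Q xh \<ge> 0"
    using lQ unfolding lstar_def by (meson order.trans zero_le_power2 mult_nonneg_nonneg less_imp_le)
  have "stage_cost Q R ?x (u k) \<le> costJ g1 Q R Nbar xh u"
    unfolding costJ_def using k nn by (intro member_le_sum) auto
  also have "\<dots> \<le> B Nbar * lstar Q xh" by (rule cost)
  also have "\<dots> \<le> ?BB * lstar Q xh" using ls0 by (intro mult_right_mono) auto
  also have "\<dots> \<le> ?BB * (KQ * (norm xh)^2)" using ls by (intro mult_left_mono) auto
  finally have st: "stage_cost Q R ?x (u k) \<le> ?BB * KQ * (norm xh)^2" by simp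
  have st2: "lamQ * (norm ?x)^2 + lamR * (norm (u k))^2 \<le> ?BB * KQ * (norm xh)^2"
    using stage_nonneg[OF lQ lR, of ?x "u k"] st by linarith
  have "(norm ?x)^2 \<le> (?BB * KQ / lamQ) * (norm xh)^2"
    using st2 lQ(2) lR(2) by (simp add: field_simps) (smt (verit) mult_nonneg_nonneg zero_le_power2)
  also have "\<dots> = (sqrt (?BB * KQ / lamQ) * norm xh)^2"
    using KQ(1) lQ(2) by (simp add: power_mult_distrib)
  finally show "norm ?x \<le> sqrt (?BB * KQ / lamQ) * norm xh"
    by (rule power2_le_imp_le) (use KQ(1) lQ(2) lR(2) in simp)
  have "(norm (u k))^2 \<le> (?BB * KQ / lamR) * (norm xh)^2"
    using st2 lQ(2) lR(2) by (simp add: field_simps) (smt (verit) mult_nonneg_nonneg zero_le_power2)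
  also have "\<dots> = (sqrt (?BB * KQ / lamR) * norm xh)^2"
    using KQ(1) lR(2) by (simp add: power_mult_distrib)
  finally show "norm (u k) \<le> sqrt (?BB * KQ / lamR) * norm xh"
    by (rule power2_le_imp_le) (use KQ(1) lQ(2) lR(2) in simp)
qed


lemma geo_Suc: "(\<Sum>i<Suc k. (L::real)^i) = 1 + L * (\<Sum>i<k. L^i)"
  by (subst sum.lessThan_Suc_shift) (simp add: sum_distrib_left)

lemma geo_mono: "(L::real) \<ge> 0 \<Longrightarrow> k \<le> n \<Longrightarrow> (\<Sum>i<k. L^i) \<le> (\<Sum>i<n. L^i)"
  by (intro sum_mono2) auto

lemma err_bound:
  fixes g1 g2 :: "real^'n \<Rightarrow> real^'m \<Rightarrow> real^'n"
  assumes L: "L \<ge> 0" "\<forall>x\<in>Omega. \<forall>y\<in>Omega. \<forall>u\<in>U. norm (g2 x u - g2 y u) \<le> L * norm (x - y)"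
   and nn: "cx \<ge> 0" "cu \<ge> 0" "eta \<ge> 0"
   and d1: "\<forall>x\<in>Omega. \<forall>u\<in>U. norm (g1 x u - g2 x u) \<le> cx * norm x + cu * norm u"
   and d2: "\<forall>x\<in>Omega. \<forall>u\<in>U. norm (g1 x u - g2 x u) \<le> eta"
   and incl: "msum S (cball 0 ((\<Sum>i<Nbar. L^i) * eta)) \<subseteq> Omega"
   and u: "\<forall>k. u k \<in> U" "\<forall>k. traj g1 xh u k \<in> S"
   and bx: "\<forall>k<Nbar. norm (traj g1 xh u k) \<le> cX * a"
   and bu: "\<forall>k<Nbar. norm (u k) \<le> cU * a"
  shows "k < Nbar \<Longrightarrow> norm (traj g2 xh u k - traj g1 xh u k) \<le> (\<Sum>i<k. L^i) * eta
      \<and> norm (traj g2 xh u k - traj g1 xh u k) \<le> (\<Sum>i<k. L^i) * ((cx*cX + cu*cU) * a)"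
proof (induction k)
  case 0 then show ?case by simp
next
  case (Suc k)
  let ?x = "traj g1 xh u k" and ?y = "traj g2 xh u k"
  let ?r = "\<lambda>k. (\<Sum>i<k. L^i)"
  have k: "k < Nbar" using Suc by simp
  from Suc.IH[OF k] have IH: "norm (?y - ?x) \<le> ?r k * eta" "norm (?y - ?x) \<le> ?r k * ((cx*cX + cu*cU) * a)" by auto
  have r0: "?r n \<ge> 0" for n using L(1) by (intro sum_nonneg) auto
  have xS: "?x \<in> S" using u by auto
  have xO: "?x \<in> Omega"
  proof -
    have "?x + 0 \<in> msum S (cball 0 (?r Nbar * eta))"
      unfolding msum_def using xS r0[of Nbar] nn(3) by (intro CollectI exI[of _ ?x] exI[of _ 0] conjI) auto
    thus ?thesis using incl by auto
  qed
  have yO: "?y \<in> Omega"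
  proof -
    have "?r k * eta \<le> ?r Nbar * eta" using geo_mono[OF L(1), of k Nbar] k nn(3) by (intro mult_right_mono) auto
    hence "?x + (?y - ?x) \<in> msum S (cball 0 (?r Nbar * eta))"
      unfolding msum_def using xS IH(1) by (intro CollectI exI[of _ ?x] exI[of _ "?y - ?x"] conjI) auto
    thus ?thesis using incl by auto
  qed
  have uk: "u k \<in> U" using u by auto
  have "norm (traj g2 xh u (Suc k) - traj g1 xh u (Suc k)) = norm ((g2 ?y (u k) - g2 ?x (u k)) + (g2 ?x (u k) - g1 ?x (u k)))"
    by simp
  also have "\<dots> \<le> norm (g2 ?y (u k) - g2 ?x (u k)) + norm (g1 ?x (u k) - g2 ?x (u k))"
    by (metis norm_triangle_ineq norm_minus_commute)
  also have "\<dots> \<le> L * norm (?y - ?x) + norm (g1 ?x (u k) - g2 ?x (u k))"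
    using L(2) xO yO uk by (intro add_right_mono) auto
  finally have main: "norm (traj g2 xh u (Suc k) - traj g1 xh u (Suc k)) \<le> L * norm (?y - ?x) + norm (g1 ?x (u k) - g2 ?x (u k))" .
  have A: "norm (traj g2 xh u (Suc k) - traj g1 xh u (Suc k)) \<le> ?r (Suc k) * eta"
  proof -
    have "L * norm (?y - ?x) \<le> L * (?r k * eta)" using IH(1) L(1) by (rule mult_left_mono)
    moreover have "norm (g1 ?x (u k) - g2 ?x (u k)) \<le> eta" using d2 xO uk by auto
    ultimately show ?thesis using main unfolding geo_Suc by (simp add: algebra_simps)
  qed
  have B: "norm (traj g2 xh u (Suc k) - traj g1 xh u (Suc k)) \<le> ?r (Suc k) * ((cx*cX + cu*cU) * a)"
  proof -
    have "L * norm (?y - ?x) \<le> L * (?r k * ((cx*cX + cu*cU) * a))" using IH(2) L(1) by (rule mult_left_mono)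
    moreover have "norm (g1 ?x (u k) - g2 ?x (u k)) \<le> cx * norm ?x + cu * norm (u k)" using d1 xO uk by auto
    moreover have "cx * norm ?x \<le> cx * (cX * a)" using bx k nn by (intro mult_left_mono) auto
    moreover have "cu * norm (u k) \<le> cu * (cU * a)" using bu k nn by (intro mult_left_mono) auto
    ultimately show ?thesis using main unfolding geo_Suc by (simp add: algebra_simps)
  qed
  from A B show ?case by blast
qed


lemma cost_compare:
  fixes g1 g2 :: "real^'n \<Rightarrow> real^'m \<Rightarrow> real^'n"
  assumes lQ: "\<forall>x. lamQ * (norm x)^2 \<le> x \<bullet> (Q *v x)" "lamQ > 0"
    and KQ: "KQ \<ge> 0" "\<forall>x y. \<bar>x \<bullet> (Q *v y)\<bar> \<le> KQ * norm x * norm y"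
    and c0: "cX \<ge> 0" "E \<ge> 0"
    and bx: "\<forall>k<Nbar. norm (traj g1 xh u k) \<le> cX * norm xh"
    and be: "\<forall>k<Nbar. norm (traj g2 xh u k - traj g1 xh u k) \<le> E * norm xh"
    and cost: "costJ g1 Q R N xh u \<le> B N * lstar Q xh"
    and N: "N \<le> Nbar"
  shows "costJ g2 Q R N xh u \<le> (B N + real Nbar * (2*KQ*cX*E + KQ*E^2) / lamQ) * lstar Q xh"
proof -
  let ?a = "norm xh"
  let ?W = "2*KQ*cX*E + KQ*E^2"
  have W0: "?W \<ge> 0" using KQ c0 by simp
  have stage: "stage_cost Q R (traj g2 xh u k) (u k) \<le> stage_cost Q R (traj g1 xh u k) (u k) + ?W * ?a^2"
    if k: "k < Nbar" for k
  proof -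
    define x where "x = traj g1 xh u k"
    define e where "e = traj g2 xh u k - traj g1 xh u k"
    have y: "traj g2 xh u k = x + e" unfolding x_def e_def by simp
    have nx: "norm x \<le> cX * ?a" using bx k unfolding x_def by auto
    have ne: "norm e \<le> E * ?a" using be k unfolding e_def by auto
    have id: "(x + e) \<bullet> (Q *v (x + e)) = x \<bullet> (Q *v x) + x \<bullet> (Q *v e) + e \<bullet> (Q *v x) + e \<bullet> (Q *v e)"
      by (simp add: matrix_vector_right_distrib inner_add_left inner_add_right)
    have b1: "x \<bullet> (Q *v e) \<le> KQ * (cX * ?a) * (E * ?a)"
    proof -
      have "x \<bullet> (Q *v e) \<le> KQ * norm x * norm e" using KQ(2) by (meson abs_le_D1)
      also have "\<dots> \<le> KQ * (cX * ?a) * (E * ?a)"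
        using nx ne KQ(1) c0 by (intro mult_mono) (auto intro: mult_nonneg_nonneg)
      finally show ?thesis .
    qed
    have b2: "e \<bullet> (Q *v x) \<le> KQ * (cX * ?a) * (E * ?a)"
    proof -
      have "e \<bullet> (Q *v x) \<le> KQ * norm e * norm x" using KQ(2) by (meson abs_le_D1)
      also have "\<dots> = KQ * norm x * norm e" by simp
      also have "\<dots> \<le> KQ * (cX * ?a) * (E * ?a)"
        using nx ne KQ(1) c0 by (intro mult_mono) (auto intro: mult_nonneg_nonneg)
      finally show ?thesis .
    qed
    have b3: "e \<bullet> (Q *v e) \<le> KQ * (E * ?a) * (E * ?a)"
    proof -
      have "e \<bullet> (Q *v e) \<le> KQ * norm e * norm e" using KQ(2) by (meson abs_le_D1)
      also have "\<dots> \<le> KQ * (E * ?a) * (E * ?a)"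
        using ne KQ(1) c0 by (intro mult_mono) (auto intro: mult_nonneg_nonneg)
      finally show ?thesis .
    qed
    have "KQ * (cX * ?a) * (E * ?a) + KQ * (cX * ?a) * (E * ?a) + KQ * (E * ?a) * (E * ?a) = ?W * ?a^2"
      by (simp add: power2_eq_square algebra_simps)
    then show ?thesis unfolding stage_cost_def y id using b1 b2 b3 unfolding x_def by linarith
  qed
  have ls: "lamQ * ?a^2 \<le> lstar Q xh" using lQ unfolding lstar_def by auto
  have "costJ g2 Q R N xh u \<le> (\<Sum>k<N. stage_cost Q R (traj g1 xh u k) (u k) + ?W * ?a^2)"
    unfolding costJ_def using N stage by (intro sum_mono) auto
  also have "\<dots> = costJ g1 Q R N xh u + real N * (?W * ?a^2)"
    unfolding costJ_def by (simp add: sum.distrib)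
  also have "\<dots> \<le> B N * lstar Q xh + real Nbar * (?W * ?a^2)"
    using cost N W0 by (intro add_mono mult_right_mono) auto
  also have "\<dots> \<le> B N * lstar Q xh + real Nbar * (?W * (lstar Q xh / lamQ))"
    using ls lQ(2) W0 by (intro add_left_mono mult_left_mono) (auto simp: field_simps)
  finally have X: "costJ g2 Q R N xh u \<le> B N * lstar Q xh + real Nbar * (?W * (lstar Q xh / lamQ))" .
  have "B N * lstar Q xh + real Nbar * (?W * (lstar Q xh / lamQ)) = (B N + real Nbar * ?W / lamQ) * lstar Q xh"
    by (simp add: field_simps)
  with X show ?thesis by simp
qed


lemma transfer_gb:
  fixes ga gb :: "real \<Rightarrow> real^'n \<Rightarrow> real^'m \<Rightarrow> real^'n"
    and Q :: "real^'n^'n" and R :: "real^'m^'m"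
    and cx cu eta :: "real \<Rightarrow> real"
  assumes QR: "pos_def_sym Q" "pos_def_sym R"
    and epsbar: "epsbar > 0"
    and nonneg: "\<forall>eps\<in>{0<..epsbar}. cx eps \<ge> 0 \<and> cu eps \<ge> 0 \<and> eta eps \<ge> 0"
    and limx: "(cx \<longlongrightarrow> 0) (at_right 0)" and limu: "(cu \<longlongrightarrow> 0) (at_right 0)"
    and L: "L \<ge> 0" "\<forall>eps\<in>{0<..epsbar}. \<forall>x\<in>Omega. \<forall>y\<in>Omega. \<forall>u\<in>U. norm (gb eps x u - gb eps y u) \<le> L * norm (x - y)"
    and d1: "\<forall>eps\<in>{0<..epsbar}. \<forall>x\<in>Omega. \<forall>u\<in>U. norm (ga eps x u - gb eps x u) \<le> cx eps * norm x + cu eps * norm u"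
    and d2: "\<forall>eps\<in>{0<..epsbar}. \<forall>x\<in>Omega. \<forall>u\<in>U. norm (ga eps x u - gb eps x u) \<le> eta eps"
    and incl: "\<forall>eps\<in>{0<..epsbar}. msum S (cball 0 ((\<Sum>i<Nbar. L^i) * eta eps)) \<subseteq> Omega"
    and cc: "\<forall>eps\<in>{0<..epsbar}. cost_controllable (ga eps) U Q R S B"
    and Nbar: "Nbar \<ge> 1"
  shows "growth_bounds gb U Q R S epsbar Nbar B"
proof -
  obtain lQ where lQ: "lQ > 0" "\<And>x. lQ * (norm x)^2 \<le> x \<bullet> (Q *v x)" using posdef_lower[OF QR(1)] by blast
  obtain lR where lR: "lR > 0" "\<And>x. lR * (norm x)^2 \<le> x \<bullet> (R *v x)" using posdef_lower[OF QR(2)] by blast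
  obtain KQ where KQ: "KQ \<ge> 0" "\<And>x y. \<bar>x \<bullet> (Q *v y)\<bar> \<le> KQ * norm x * norm y" using quad_bound by blast
  have lQ': "\<forall>x. lQ * (norm x)^2 \<le> x \<bullet> (Q *v x)" using lQ(2) by blast
  have lR': "\<forall>x. lR * (norm x)^2 \<le> x \<bullet> (R *v x)" using lR(2) by blast
  have KQ': "\<forall>x y. \<bar>x \<bullet> (Q *v y)\<bar> \<le> KQ * norm x * norm y" using KQ(2) by blast
  have epsin: "epsbar \<in> {0<..epsbar}" using epsbar by simp
  have Bmono: "mono B" using cc epsin unfolding cost_controllable_def by blast
  define BB where "BB = max (B Nbar) 0"
  define cX where "cX = sqrt (BB * KQ / lQ)"
  define cU where "cU = sqrt (BB * KQ / lR)"
  define r where "r = (\<Sum>i<Nbar. L^i)"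
  define E where "E = (\<lambda>eps. r * (cx eps * cX + cu eps * cU))"
  define Be where "Be = (\<lambda>eps N. B N + real Nbar * (2*KQ*cX*E eps + KQ*(E eps)^2) / lQ)"
  have cX0: "cX \<ge> 0" and cU0: "cU \<ge> 0" unfolding cX_def cU_def BB_def using KQ lQ lR by auto
  have r0: "r \<ge> 0" unfolding r_def using L(1) by (intro sum_nonneg) auto
  have part1: "(\<forall>i j. 1 \<le> i \<longrightarrow> i \<le> j \<longrightarrow> j \<le> Nbar \<longrightarrow> Be eps i \<le> Be eps j) \<and>
          (\<forall>xh\<in>S. \<forall>N\<in>{1..Nbar}. \<exists>u. adm U N u \<and>
              valV (gb eps) U Q R N xh \<le> costJ (gb eps) Q R N xh u \<and>
              costJ (gb eps) Q R N xh u \<le> Be eps N * lstar Q xh)"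
    if eps: "eps \<in> {0<..epsbar}" for eps
  proof (intro conjI allI impI ballI)
    fix i j :: nat assume "i \<le> j"
    then show "Be eps i \<le> Be eps j" unfolding Be_def using Bmono by (simp add: monoD)
  next
    fix xh N assume xh: "xh \<in> S" and N: "N \<in> {1..Nbar}"
    from cc eps xh obtain u where u: "\<forall>k. u k \<in> U" "\<forall>k. traj (ga eps) xh u k \<in> S"
      "\<forall>N\<ge>1. valV (ga eps) U Q R N xh \<le> costJ (ga eps) Q R N xh u \<and>
                 costJ (ga eps) Q R N xh u \<le> B N * lstar Q xh"
      unfolding cost_controllable_def by blast
    have nn: "cx eps \<ge> 0" "cu eps \<ge> 0" "eta eps \<ge> 0" using nonneg eps by auto
    have costN: "costJ (ga eps) Q R Nbar xh u \<le> B Nbar * lstar Q xh" using u(3) Nbar by auto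
    have bx: "\<forall>k<Nbar. norm (traj (ga eps) xh u k) \<le> cX * norm xh"
      using state_bounds(1)[where B=B and Nbar=Nbar, OF lQ' lQ(1) lR' lR(1) KQ(1) KQ' costN] unfolding cX_def BB_def by blast
    have bu: "\<forall>k<Nbar. norm (u k) \<le> cU * norm xh"
      using state_bounds(2)[where B=B and Nbar=Nbar, OF lQ' lQ(1) lR' lR(1) KQ(1) KQ' costN] unfolding cU_def BB_def by blast
    have be: "\<forall>k<Nbar. norm (traj (gb eps) xh u k - traj (ga eps) xh u k) \<le> E eps * norm xh"
    proof (intro allI impI)
      fix k assume k: "k < Nbar"
      have "norm (traj (gb eps) xh u k - traj (ga eps) xh u k) \<le> (\<Sum>i<k. L^i) * ((cx eps*cX + cu eps*cU) * norm xh)"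
        using err_bound[of L Omega U "gb eps" "cx eps" "cu eps" "eta eps" "ga eps" S Nbar u xh cX "norm xh" cU, OF L(1) _ nn]
          L(2) d1 d2 incl eps u(1,2) bx bu k by blast
      also have "\<dots> \<le> r * ((cx eps*cX + cu eps*cU) * norm xh)"
        unfolding r_def using geo_mono[OF L(1), of k Nbar] k nn cX0 cU0
        by (intro mult_right_mono) auto
      finally show "norm (traj (gb eps) xh u k - traj (ga eps) xh u k) \<le> E eps * norm xh"
        unfolding E_def by (simp add: mult.assoc)
    qed
    have E0: "E eps \<ge> 0" unfolding E_def using r0 nn cX0 cU0 by simp
    have cost: "costJ (ga eps) Q R N xh u \<le> B N * lstar Q xh" using u(3) N by auto
    show "\<exists>u. adm U N u \<and>
              valV (gb eps) U Q R N xh \<le> costJ (gb eps) Q R N xh u \<and>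
              costJ (gb eps) Q R N xh u \<le> Be eps N * lstar Q xh"
    proof (intro exI conjI)
      show adm: "adm U N u" unfolding adm_def using u(1) by auto
      have cnn: "costJ (gb eps) Q R N xh v \<ge> 0" for v
        unfolding costJ_def
      proof (intro sum_nonneg)
        fix k
        have "0 \<le> lQ * (norm (traj (gb eps) xh v k))^2 + lR * (norm (v k))^2" using lQ(1) lR(1) by simp
        also have "\<dots> \<le> stage_cost Q R (traj (gb eps) xh v k) (v k)"
          by (rule stage_nonneg[OF lQ' lQ(1) lR' lR(1)])
        finally show "0 \<le> stage_cost Q R (traj (gb eps) xh v k) (v k)" .
      qed
      show "valV (gb eps) U Q R N xh \<le> costJ (gb eps) Q R N xh u"
        unfolding valV_def
        by (rule cInf_lower) (use adm cnn in \<open>auto intro!: bdd_belowI[of _ 0]\<close>)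
      show "costJ (gb eps) Q R N xh u \<le> Be eps N * lstar Q xh"
        unfolding Be_def
        by (rule cost_compare[where B=B and N=N, OF lQ' lQ(1) KQ(1) KQ' cX0 E0 bx be cost]) (use N in auto)
    qed
  qed
  have lim: "((\<lambda>eps. Be eps N) \<longlongrightarrow> B N) (at_right 0)" for N
  proof -
    have "(E \<longlongrightarrow> r * (0 * cX + 0 * cU)) (at_right 0)"
      unfolding E_def by (intro tendsto_intros limx limu)
    hence E: "(E \<longlongrightarrow> 0) (at_right 0)" by simp
    have "((\<lambda>eps. Be eps N) \<longlongrightarrow> B N + real Nbar * (2*KQ*cX*0 + KQ*0^2) / lQ) (at_right 0)"
      unfolding Be_def by (intro tendsto_intros E) (use lQ in auto)
    thus ?thesis by simp
  qed
  show ?thesis unfolding growth_bounds_def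
    by (rule exI[of _ Be]) (use part1 lim in blast)
qed


theorem mainTheorem1:
  fixes f :: "real^'n \<Rightarrow> real^'m \<Rightarrow> real^'n"
    and fe :: "real \<Rightarrow> real^'n \<Rightarrow> real^'m \<Rightarrow> real^'n"
    and U :: "(real^'m) set" and Q :: "real^'n^'n" and R :: "real^'m^'m"
    and S Omega :: "(real^'n) set"
    and epsbar Lf Lbar :: real and Nbar :: nat
    and cx cu eta :: "real \<Rightarrow> real"
  assumes U: "convex U" "compact U" "0 \<in> interior U"
    and f_cont: "continuous_on (UNIV \<times> U) (\<lambda>(x,u). f x u)" and f0: "f 0 0 = 0"
    and QR: "pos_def_sym Q" "pos_def_sym R"
    and epsbar: "epsbar > 0"
    and S0: "0 \<in> interior S"
    and Omega0: "0 \<in> interior Omega"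
    and EB_nonneg: "\<forall>eps\<in>{0<..epsbar}. cx eps \<ge> 0 \<and> cu eps \<ge> 0 \<and> eta eps \<ge> 0"
    and EB_lim: "((\<lambda>eps. max (cx eps) (max (cu eps) (eta eps))) \<longlongrightarrow> 0) (at_right 0)"
    and EB_prop: "\<forall>eps\<in>{0<..epsbar}. \<forall>x\<in>Omega. \<forall>u\<in>U.
                    norm (f x u - fe eps x u) \<le> cx eps * norm x + cu eps * norm u"
    and EB_unif: "\<forall>eps\<in>{0<..epsbar}. \<forall>x\<in>Omega. \<forall>u\<in>U. norm (f x u - fe eps x u) \<le> eta eps"
    and L_nonneg: "Lf \<ge> 0" "Lbar \<ge> 0"
    and L_f: "\<forall>x\<in>Omega. \<forall>y\<in>Omega. \<forall>u\<in>U. norm (f x u - f y u) \<le> Lf * norm (x - y)"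
    and L_fe: "\<forall>eps\<in>{0<..epsbar}. \<exists>Le. Le \<le> Lbar \<and>
                 (\<forall>x\<in>Omega. \<forall>y\<in>Omega. \<forall>u\<in>U. norm (fe eps x u - fe eps y u) \<le> Le * norm (x - y))"
    and Nbar: "Nbar \<ge> 1"
  shows
    "(\<forall>B. cost_controllable f U Q R S B \<and>
          (\<forall>eps\<in>{0<..epsbar}. msum S (cball 0 ((\<Sum>i<Nbar. Lbar ^ i) * eta eps)) \<subseteq> Omega)
        \<longrightarrow> growth_bounds fe U Q R S epsbar Nbar B)
   \<and> (\<forall>B. (\<forall>eps\<in>{0<..epsbar}. cost_controllable (fe eps) U Q R S B) \<and>
          (\<forall>eps\<in>{0<..epsbar}. msum S (cball 0 ((\<Sum>i<Nbar. Lf ^ i) * eta eps)) \<subseteq> Omega)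
        \<longrightarrow> growth_bounds (\<lambda>_. f) U Q R S epsbar Nbar B)"
  proof -
  have ev: "eventually (\<lambda>e. e \<in> {0<..epsbar}) (at_right (0::real))"
    unfolding eventually_at_right_field using epsbar by (intro exI[of _ epsbar]) auto
  have limx: "(cx \<longlongrightarrow> 0) (at_right 0)"
  proof (rule tendsto_sandwich[OF _ _ tendsto_const EB_lim])
    show "eventually (\<lambda>e. 0 \<le> cx e) (at_right 0)" using ev by eventually_elim (use EB_nonneg in auto)
    show "eventually (\<lambda>e. cx e \<le> max (cx e) (max (cu e) (eta e))) (at_right 0)" by (simp add: max.coboundedI1 max.coboundedI2)
  qed
  have limu: "(cu \<longlongrightarrow> 0) (at_right 0)"
  proof (rule tendsto_sandwich[OF _ _ tendsto_const EB_lim])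
    show "eventually (\<lambda>e. 0 \<le> cu e) (at_right 0)" using ev by eventually_elim (use EB_nonneg in auto)
    show "eventually (\<lambda>e. cu e \<le> max (cx e) (max (cu e) (eta e))) (at_right 0)" by (simp add: max.coboundedI1 max.coboundedI2)
  qed
  have Lfe: "\<forall>eps\<in>{0<..epsbar}. \<forall>x\<in>Omega. \<forall>y\<in>Omega. \<forall>u\<in>U. norm (fe eps x u - fe eps y u) \<le> Lbar * norm (x - y)"
  proof (intro ballI)
    fix eps x y u assume h: "eps \<in> {0<..epsbar}" "x \<in> Omega" "y \<in> Omega" "u \<in> U"
    obtain Le where "Le \<le> Lbar" "\<forall>x\<in>Omega. \<forall>y\<in>Omega. \<forall>u\<in>U. norm (fe eps x u - fe eps y u) \<le> Le * norm (x - y)"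
      using L_fe h(1) by blast
    moreover have "Le * norm (x - y) \<le> Lbar * norm (x - y)" using calculation(1) by (intro mult_right_mono) auto
    ultimately show "norm (fe eps x u - fe eps y u) \<le> Lbar * norm (x - y)" using h by force
  qed
  have P1: "growth_bounds fe U Q R S epsbar Nbar B"
    if "cost_controllable f U Q R S B"
       "\<forall>eps\<in>{0<..epsbar}. msum S (cball 0 ((\<Sum>i<Nbar. Lbar ^ i) * eta eps)) \<subseteq> Omega" for B
  proof -
    have cc: "\<forall>eps\<in>{0<..epsbar}. cost_controllable ((\<lambda>_. f) eps) U Q R S B" using that(1) by simp
    have d1: "\<forall>eps\<in>{0<..epsbar}. \<forall>x\<in>Omega. \<forall>u\<in>U. norm ((\<lambda>_. f) eps x u - fe eps x u) \<le> cx eps * norm x + cu eps * norm u"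
      using EB_prop by simp
    have d2: "\<forall>eps\<in>{0<..epsbar}. \<forall>x\<in>Omega. \<forall>u\<in>U. norm ((\<lambda>_. f) eps x u - fe eps x u) \<le> eta eps"
      using EB_unif by simp
    show ?thesis
      by (rule transfer_gb[where ga="\<lambda>_. f" and gb=fe and L=Lbar and B=B, OF QR epsbar EB_nonneg limx limu L_nonneg(2) Lfe d1 d2 that(2) cc Nbar])
  qed
  have EB_prop': "\<forall>eps\<in>{0<..epsbar}. \<forall>x\<in>Omega. \<forall>u\<in>U. norm (fe eps x u - f x u) \<le> cx eps * norm x + cu eps * norm u"
    using EB_prop by (simp add: norm_minus_commute)
  have EB_unif': "\<forall>eps\<in>{0<..epsbar}. \<forall>x\<in>Omega. \<forall>u\<in>U. norm (fe eps x u - f x u) \<le> eta eps"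
    using EB_unif by (simp add: norm_minus_commute)
  have Lf': "\<forall>eps\<in>{0<..epsbar}. \<forall>x\<in>Omega. \<forall>y\<in>Omega. \<forall>u\<in>U. norm ((\<lambda>_. f) eps x u - (\<lambda>_. f) eps y u) \<le> Lf * norm (x - y)"
    using L_f by simp
  have P2: "growth_bounds (\<lambda>_. f) U Q R S epsbar Nbar B"
    if "\<forall>eps\<in>{0<..epsbar}. cost_controllable (fe eps) U Q R S B"
       "\<forall>eps\<in>{0<..epsbar}. msum S (cball 0 ((\<Sum>i<Nbar. Lf ^ i) * eta eps)) \<subseteq> Omega" for B
  proof -
    have d1: "\<forall>eps\<in>{0<..epsbar}. \<forall>x\<in>Omega. \<forall>u\<in>U. norm (fe eps x u - (\<lambda>_. f) eps x u) \<le> cx eps * norm x + cu eps * norm u"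
      using EB_prop' by simp
    have d2: "\<forall>eps\<in>{0<..epsbar}. \<forall>x\<in>Omega. \<forall>u\<in>U. norm (fe eps x u - (\<lambda>_. f) eps x u) \<le> eta eps"
      using EB_unif' by simp
    show ?thesis
      by (rule transfer_gb[where ga=fe and gb="\<lambda>_. f" and L=Lf and B=B, OF QR epsbar EB_nonneg limx limu L_nonneg(1) Lf' d1 d2 that(2) that(1) Nbar])
  qed
  show ?thesis using P1 P2 by blast
qed

end
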